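(* Let $N\ge 2$ and let $\theta_1,\dots,\theta_N\in\mathbb R$. Consider the $N$-qubit state $|e_{\theta_1}\rangle\otimes\cdots\otimes|e_{\theta_N}\rangle$, where $|e_\theta\rangle=(|0\rangle+e^{i\theta}|1\rangle)/\sqrt2$. Apply, for each $j=2,\dots,N$, a CNOT gate with qubit $1$ as control and qubit $j$ as target, and then measure each qubit $j=2,\dots,N$ in the computational basis, obtaining outcomes $m_j\in\{0,1\}$. Then the outcomes $m_2,\dots,m_N$ are independent and uniformly distributed, and conditional on them the first qubit is left (up to a global phase) in the state $|e_{\theta_{\rm tot}}\rangle$ with $\theta_{\rm tot}=\theta_1+\sum_{j=2}^N(-1)^{m_j}\theta_j$. In particular, if $\theta_1=\cdots=\theta_N=\theta$ and exactly $k$ of the outcomes equal $0$, the first qubit is left in $|e_{(2k+2-N)\theta}\rangle$, which occurs with probability $2^{-(N-1)}\binom{N-1}{k}$, and the average quantum Fisher information about $\theta$ of the resulting single-qubit state, $\sum_{k=0}^{N-1}2^{-(N-1)}\binom{N-1}{k}(2k+2-N)^2$, equals $N$, the quantum Fisher information of $|e_\theta\rangle^{\otimes N}$.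
   Context: The CNOT gate acts as $|a\rangle|b\rangle\mapsto|a\rangle|a\oplus b\rangle$ for $a,b\in\{0,1\}$. For a differentiable family of pure states $|\phi_\theta\rangle$, the quantum Fisher information is $F(|\phi_\theta\rangle)=4\left(\langle\partial_\theta\phi_\theta|\partial_\theta\phi_\theta\rangle-|\langle\phi_\theta|\partial_\theta\phi_\theta\rangle|^2\right)$; for $|e_{c\theta}\rangle$ it equals $c^2$. *)

theory Defs
  imports "HOL-Analysis.Analysis"
begin

text \<open>Computational basis states of an n-qubit register are bit lists of length n
  (False = |0>, True = |1>); list index 0 is qubit 1, index j is qubit j+1.
  A state is its amplitude function.\<close>

definition ket_e :: "real \<Rightarrow> bool \<Rightarrow> complex" where
  "ket_e \<theta> b = (if b then cis \<theta> else 1) / complex_of_real (sqrt 2)"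

definition prod_state :: "nat \<Rightarrow> (nat \<Rightarrow> real) \<Rightarrow> bool list \<Rightarrow> complex" where
  "prod_state N th xs = (if length xs = N then (\<Prod>j<N. ket_e (th j) (xs ! j)) else 0)"

text \<open>CNOT with control c and target t: |..a..b..> maps to |..a..(a xor b)..>;
  the amplitude of the image at basis xs is the old amplitude at xs with target bit flipped
  iff control bit is set.\<close>
definition cnot :: "nat \<Rightarrow> nat \<Rightarrow> (bool list \<Rightarrow> complex) \<Rightarrow> bool list \<Rightarrow> complex" where
  "cnot c t \<psi> = (\<lambda>xs. \<psi> (xs[t := (xs ! t \<noteq> xs ! c)]))"

definition cnot_cascade :: "nat \<Rightarrow> (bool list \<Rightarrow> complex) \<Rightarrow> bool list \<Rightarrow> complex" where
  "cnot_cascade N \<psi> = fold (\<lambda>j \<phi>. cnot 0 j \<phi>) [1..<N] \<psi>"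

definition outcome_prob :: "(bool list \<Rightarrow> complex) \<Rightarrow> bool list \<Rightarrow> real" where
  "outcome_prob \<psi> m = (\<Sum>a\<in>UNIV. (cmod (\<psi> (a # m)))\<^sup>2)"

definition post_state :: "(bool list \<Rightarrow> complex) \<Rightarrow> bool list \<Rightarrow> bool \<Rightarrow> complex" where
  "post_state \<psi> m a = \<psi> (a # m) / complex_of_real (sqrt (outcome_prob \<psi> m))"

text \<open>theta_tot = theta_1 + sum_{j=2}^N (-1)^{m_j} theta_j; m ! (j-1) is the outcome of qubit j+1.\<close>
definition theta_tot :: "nat \<Rightarrow> (nat \<Rightarrow> real) \<Rightarrow> bool list \<Rightarrow> real" where
  "theta_tot N th m = th 0 + (\<Sum>j\<in>{1..<N}. (if m ! (j - 1) then -1 else 1) * th j)"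

definition qfi :: "(real \<Rightarrow> 'b \<Rightarrow> complex) \<Rightarrow> 'b set \<Rightarrow> real \<Rightarrow> real" where
  "qfi \<phi> S \<theta> = 4 * ((\<Sum>b\<in>S. (cmod (vector_derivative (\<lambda>t. \<phi> t b) (at \<theta>)))\<^sup>2)
      - (cmod (\<Sum>b\<in>S. cnj (\<phi> \<theta> b) * vector_derivative (\<lambda>t. \<phi> t b) (at \<theta>)))\<^sup>2)"

definition num_zeros :: "bool list \<Rightarrow> nat" where
  "num_zeros m = length (filter Not m)"

end

theory Submission
  imports Defs
begin

lemma deriv_cis:
  assumes "s \<noteq> 0"
  shows "vector_derivative (\<lambda>t. cis (r * t) / complex_of_real s) (at x) = \<i> * of_real r * cis (r * x) / of_real s"
proof -
  have "((\<lambda>t. cis (r * t) / complex_of_real s) has_vector_derivative (\<i> * of_real r * cis (r * x) / of_real s)) (at x)"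
    unfolding has_vector_derivative_def using assms
    by (auto intro!: derivative_eq_intros simp: fun_eq_iff scaleR_conv_of_real field_simps)
  then show ?thesis by (rule vector_derivative_at)
qed

lemma cnj_prod_aux:
  assumes "s \<noteq> 0"
  shows "cnj (cis x / of_real s) * (\<i> * of_real r * cis x / of_real s) = \<i> * of_real (r / s^2)"
proof -
  have "cnj (cis x / of_real s) * (\<i> * of_real r * cis x / of_real s) = \<i> * of_real r * (cis (-x) * cis x) / (of_real s * of_real s)"
    by (simp add: cis_cnj)
  also have "\<dots> = \<i> * of_real (r / s^2)"
    using assms by (simp add: cis_mult power2_eq_square)
  finally show ?thesis .
qed

lemma norm_aux: "(cmod (\<i> * of_real r * cis x / of_real s))\<^sup>2 = r^2 / s^2"
  by (simp add: norm_mult norm_divide power_divide)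

lemma qfi_cis:
  assumes "finite S" "s \<noteq> 0"
    and eq: "\<And>b. b \<in> S \<Longrightarrow> (\<lambda>t. \<phi> t b) = (\<lambda>t. cis (\<rho> b * t) / complex_of_real s)"
  shows "qfi \<phi> S \<theta> = 4 * ((\<Sum>b\<in>S. (\<rho> b)^2) / s^2 - ((\<Sum>b\<in>S. \<rho> b) / s^2)^2)"
proof -
  have d: "vector_derivative (\<lambda>t. \<phi> t b) (at \<theta>) = \<i> * of_real (\<rho> b) * cis (\<rho> b * \<theta>) / of_real s"
    if "b \<in> S" for b
    using eq[OF that] deriv_cis[OF assms(2)] by simp
  have v: "\<phi> \<theta> b = cis (\<rho> b * \<theta>) / of_real s" if "b \<in> S" for b
    using fun_cong[OF eq[OF that], of \<theta>] by simp
  have 1: "(\<Sum>b\<in>S. (cmod (vector_derivative (\<lambda>t. \<phi> t b) (at \<theta>)))\<^sup>2) = (\<Sum>b\<in>S. (\<rho> b)^2) / s^2"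
    by (simp add: d norm_aux sum_divide_distrib)
  have 2: "(\<Sum>b\<in>S. cnj (\<phi> \<theta> b) * vector_derivative (\<lambda>t. \<phi> t b) (at \<theta>))
      = \<i> * of_real ((\<Sum>b\<in>S. \<rho> b) / s^2)"
  proof -
    have "(\<Sum>b\<in>S. cnj (\<phi> \<theta> b) * vector_derivative (\<lambda>t. \<phi> t b) (at \<theta>))
      = (\<Sum>b\<in>S. \<i> * of_real (\<rho> b / s^2))"
    proof (rule sum.cong[OF refl])
      fix b assume "b \<in> S"
      show "cnj (\<phi> \<theta> b) * vector_derivative (\<lambda>t. \<phi> t b) (at \<theta>) = \<i> * of_real (\<rho> b / s^2)"
        unfolding d[OF \<open>b \<in> S\<close>] v[OF \<open>b \<in> S\<close>] by (rule cnj_prod_aux[OF assms(2)])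
    qed
    also have "\<dots> = \<i> * of_real ((\<Sum>b\<in>S. \<rho> b) / s^2)"
      by (simp add: sum_distrib_left sum_divide_distrib)
    finally show ?thesis .
  qed
  show ?thesis unfolding qfi_def 1 2 norm_mult norm_ii norm_of_real
    by (simp add: power_divide)
qed

definition cnt :: "bool \<Rightarrow> bool list \<Rightarrow> nat" where
  "cnt b xs = length (filter (\<lambda>x. x = b) xs)"

abbreviation L :: "nat \<Rightarrow> bool list set" where "L n \<equiv> {xs. length xs = n}"

lemma finite_L: "finite (L n)"
  using finite_lists_length_eq[of "UNIV :: bool set" n] by simp

lemma sum_L_Suc:
  "(\<Sum>xs\<in>L (Suc n). f xs) = (\<Sum>xs\<in>L n. f (False # xs) + f (True # xs))"
proof -
  have "L (Suc n) = Cons False ` L n \<union> Cons True ` L n"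
    by (auto simp: length_Suc_conv)
  then have "(\<Sum>xs\<in>L (Suc n). f xs) = (\<Sum>xs\<in>Cons False ` L n. f xs) + (\<Sum>xs\<in>Cons True ` L n. f xs)"
    by (simp, intro sum.union_disjoint) (auto simp: finite_L)
  also have "\<dots> = (\<Sum>xs\<in>L n. f (False # xs)) + (\<Sum>xs\<in>L n. f (True # xs))"
    by (simp add: sum.reindex)
  finally show ?thesis by (simp add: sum.distrib)
qed

lemma S0c: "card (L n) = 2^n" using card_lists_length_eq[of "UNIV::bool set" n] by simp

lemma S0: "(\<Sum>xs\<in>L n. 1::real) = 2 ^ n"
  by (simp add: S0c)

lemma S1: "2 * (\<Sum>xs\<in>L n. real (cnt b xs)) = real n * 2 ^ n"
proof (induction n)
  case 0 then show ?case by (simp add: cnt_def)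
next
  case (Suc n)
  have "(\<Sum>xs\<in>L (Suc n). real (cnt b xs)) = (\<Sum>xs\<in>L n. 2 * real (cnt b xs) + 1)"
    by (simp add: sum_L_Suc cnt_def) (rule sum.cong, auto)
  also have "\<dots> = 2 * (\<Sum>xs\<in>L n. real (cnt b xs)) + 2 ^ n"
    by (simp add: sum.distrib sum_distrib_left S0 S0c)
  finally show ?case using Suc by (simp add: algebra_simps)
qed

lemma S2: "4 * (\<Sum>xs\<in>L n. (real (cnt b xs))^2) = real n * (real n + 1) * 2 ^ n"
proof (induction n)
  case 0 then show ?case by (simp add: cnt_def)
next
  case (Suc n)
  have "(\<Sum>xs\<in>L (Suc n). (real (cnt b xs))^2) = (\<Sum>xs\<in>L n. 2 * (real (cnt b xs))^2 + 2 * real (cnt b xs) + 1)"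
    by (simp add: sum_L_Suc cnt_def) (rule sum.cong, auto simp: power2_eq_square algebra_simps)
  also have "\<dots> = 2 * (\<Sum>xs\<in>L n. (real (cnt b xs))^2) + 2 * (\<Sum>xs\<in>L n. real (cnt b xs)) + 2 ^ n"
    by (simp add: sum.distrib sum_distrib_left S0 S0c)
  finally show ?case using Suc S1[of b n] by (simp add: algebra_simps)
qed

lemma card_zeros: "card {m. length m = n \<and> num_zeros m = k} = n choose k"
proof (induction n arbitrary: k)
  case 0
  have "{m. length m = 0 \<and> num_zeros m = k} = (if k = 0 then {[]} else {})"
    by (auto simp: num_zeros_def)
  then show ?case by simp
next
  case (Suc n)
  have c: "card {m. length m = n \<and> num_zeros m = j} = (\<Sum>xs\<in>L n. if num_zeros xs = j then 1 else 0)" for n j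
  proof -
    have "{m. length m = n \<and> num_zeros m = j} = {m \<in> L n. num_zeros m = j}" by auto
    then show ?thesis by (simp add: sum.inter_filter[symmetric] finite_L)
  qed
  have "card {m. length m = Suc n \<and> num_zeros m = k} = (\<Sum>xs\<in>L n. (if num_zeros xs + 1 = k then 1 else 0) + (if num_zeros xs = k then 1 else 0))"
    by (subst c) (simp add: sum_L_Suc num_zeros_def)
  also have "\<dots> = (\<Sum>xs\<in>L n. if num_zeros xs + 1 = k then 1 else 0) + card {m. length m = n \<and> num_zeros m = k}"
    by (simp add: sum.distrib c)
  also have "\<dots> = Suc n choose k"
  proof (cases k)
    case 0 then show ?thesis using Suc by simp
  next
    case (Suc j)
    then have "(\<Sum>xs\<in>L n. if num_zeros xs + 1 = k then 1 else 0) = card {m. length m = n \<and> num_zeros m = j}"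
      by (simp add: c)
    then show ?thesis using Suc.IH Suc by simp
  qed
  finally show ?case .
qed

lemma num_zeros_le: "num_zeros m \<le> length m"
  by (simp add: num_zeros_def)

lemma group_zeros: "(\<Sum>xs\<in>L n. f (num_zeros xs)) = (\<Sum>k\<le>n. real (n choose k) * f k)"
proof -
  have "(\<Sum>xs\<in>L n. f (num_zeros xs)) = (\<Sum>k\<le>n. \<Sum>xs\<in>{x \<in> L n. num_zeros x = k}. f (num_zeros xs))"
    by (rule sum.group[symmetric]) (auto simp: finite_L num_zeros_le)
  also have "\<dots> = (\<Sum>k\<le>n. \<Sum>xs\<in>{x \<in> L n. num_zeros x = k}. f k)"
    by (intro sum.cong) auto
  also have "\<dots> = (\<Sum>k\<le>n. real (n choose k) * f k)"
    by (simp add: card_zeros)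
  finally show ?thesis .
qed

lemma nz_cnt: "num_zeros m = cnt False m"
  by (simp add: num_zeros_def cnt_def)

lemma fold_cnot:
  "fold (\<lambda>j \<phi>. cnot 0 j \<phi>) [1..<k] \<psi> xs
     = \<psi> (map (\<lambda>i. if 1 \<le> i \<and> i < k then xs!i \<noteq> xs!0 else xs!i) [0..<length xs])"
proof (induction k arbitrary: xs)
  case 0 then show ?case by (simp add: map_nth)
next
  case (Suc k)
  show ?case
  proof (cases "1 \<le> k")
    case False
    then have "k = 0" by simp
    then show ?thesis by (simp add: map_nth)
  next
    case True
    have "fold (\<lambda>j \<phi>. cnot 0 j \<phi>) [1..<Suc k] \<psi> xs
       = fold (\<lambda>j \<phi>. cnot 0 j \<phi>) [1..<k] \<psi> (xs[k := (xs ! k \<noteq> xs ! 0)])"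
      using True by (simp add: cnot_def)
    also have "\<dots> = \<psi> (map (\<lambda>i. if 1 \<le> i \<and> i < Suc k then xs!i \<noteq> xs!0 else xs!i) [0..<length xs])"
      unfolding Suc.IH using True
      by (intro arg_cong[where f=\<psi>] map_cong) (auto simp: nth_list_update less_Suc_eq)
    finally show ?thesis .
  qed
qed

lemma cascade_cons:
  assumes "length m = n"
  shows "cnot_cascade (Suc n) \<psi> (a # m) = \<psi> (a # map (\<lambda>b. b \<noteq> a) m)"
proof -
  have "map (\<lambda>i. if 1 \<le> i \<and> i < Suc n then (a#m)!i \<noteq> (a#m)!0 else (a#m)!i) [0..<length (a#m)]
      = a # map (\<lambda>b. b \<noteq> a) m"
  proof (rule nth_equalityI)
    fix i assume "i < length (map (\<lambda>i. if 1 \<le> i \<and> i < Suc n then (a#m)!i \<noteq> (a#m)!0 else (a#m)!i) [0..<length (a#m)])"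
    then show "map (\<lambda>i. if 1 \<le> i \<and> i < Suc n then (a#m)!i \<noteq> (a#m)!0 else (a#m)!i) [0..<length (a#m)] ! i
      = (a # map (\<lambda>b. b \<noteq> a) m) ! i"
      using assms by (cases i) (auto simp del: upt_Suc)
  qed (simp add: assms)
  then show ?thesis unfolding cnot_cascade_def fold_cnot using assms by simp
qed

lemma ket_e_cis: "ket_e x b = cis ((if b then 1 else 0) * x) / complex_of_real (sqrt 2)"
  by (simp add: ket_e_def)

lemma prod_ket_same:
  "(\<Prod>j<length xs. ket_e t (xs!j)) = cis (real (cnt True xs) * t) / complex_of_real (sqrt 2 ^ length xs)"
proof (induction xs)
  case Nil then show ?case by (simp add: cnt_def)
next
  case (Cons a xs)
  have "(\<Prod>j<length (a#xs). ket_e t ((a#xs)!j)) = ket_e t a * (\<Prod>j<length xs. ket_e t (xs!j))"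
    by (simp only: length_Cons prod.lessThan_Suc_shift) simp
  also have "\<dots> = cis (real (cnt True (a#xs)) * t) / complex_of_real (sqrt 2 ^ length (a#xs))"
    unfolding Cons by (cases a) (auto simp: ket_e_def cnt_def cis_mult algebra_simps)
  finally show ?case .
qed

lemma prod_cis: "(\<Prod>j\<in>A. cis (f j)) = cis (\<Sum>j\<in>A. f j)"
  by (cases "finite A") (simp_all add: cis_conv_exp exp_sum sum_distrib_left)

lemma shift_sum: "(\<Sum>j\<in>{1..<Suc n}. g j) = (\<Sum>j<n. g (Suc j))"
  by (induction n) simp_all

lemma amp:
  fixes th :: "nat \<Rightarrow> real"
  assumes "length m = n"
  defines "c \<equiv> (\<Prod>j<n. if m!j then cis (th (Suc j)) else 1)"
  shows "cnot_cascade (Suc n) (prod_state (Suc n) th) (a # m)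
     = c * ket_e (theta_tot (Suc n) th m) a / complex_of_real (sqrt 2 ^ n)"
proof -
  have "cnot_cascade (Suc n) (prod_state (Suc n) th) (a # m)
     = ket_e (th 0) a * (\<Prod>j<n. ket_e (th (Suc j)) (m!j \<noteq> a))"
    by (simp only: cascade_cons[OF assms(1)] prod_state_def prod.lessThan_Suc_shift) (simp add: assms)
  also have "(\<Prod>j<n. ket_e (th (Suc j)) (m!j \<noteq> a))
     = (\<Prod>j<n. if m!j \<noteq> a then cis (th (Suc j)) else 1) / complex_of_real (sqrt 2 ^ n)"
    by (simp add: ket_e_def prod_dividef)
  also have "(\<Prod>j<n. if m!j \<noteq> a then cis (th (Suc j)) else 1)
     = c * (if a then cis (\<Sum>j<n. (if m!j then -1 else 1) * th (Suc j)) else 1)"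
  proof (cases a)
    case True
    have "(\<Prod>j<n. if m!j \<noteq> a then cis (th (Suc j)) else 1)
      = (\<Prod>j<n. (if m!j then cis (th (Suc j)) else 1) * cis ((if m!j then -1 else 1) * th (Suc j)))"
      using True by (intro prod.cong) (auto simp: cis_mult)
    then show ?thesis using True by (simp add: prod.distrib c_def prod_cis)
  qed (simp add: c_def)
  also have "theta_tot (Suc n) th m = th 0 + (\<Sum>j<n. (if m!j then -1 else 1) * th (Suc j))"
    unfolding theta_tot_def
    by (subst shift_sum) simp
  ultimately show ?thesis
    by (cases a) (auto simp: ket_e_def cis_mult)
qed

lemma norm_c: "cmod (\<Prod>j<n. if m!j then cis (th (Suc j)) else 1) = 1"
proof -
  have "(\<Prod>j<n. cmod (if m!j then cis (th (Suc j)) else 1)) = (\<Prod>j<n. 1)"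
    by (rule prod.cong) auto
  then show ?thesis by (simp add: prod_norm[symmetric])
qed

lemma norm_ket: "(cmod (ket_e x a))^2 = 1/2"
  by (simp add: ket_e_def norm_divide power_divide)

lemma part1:
  fixes th :: "nat \<Rightarrow> real"
  assumes "length m = n"
  defines "c \<equiv> (\<Prod>j<n. if m!j then cis (th (Suc j)) else 1)"
  shows "outcome_prob (cnot_cascade (Suc n) (prod_state (Suc n) th)) m = 1 / 2 ^ n"
    and "post_state (cnot_cascade (Suc n) (prod_state (Suc n) th)) m = (\<lambda>a. c * ket_e (theta_tot (Suc n) th m) a)"
proof -
  have A: "cnot_cascade (Suc n) (prod_state (Suc n) th) (a # m)
     = c * ket_e (theta_tot (Suc n) th m) a / complex_of_real (sqrt 2 ^ n)" for a
    unfolding c_def by (rule amp[OF assms(1)])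
  have nc: "cmod c = 1" unfolding c_def by (rule norm_c)
  have r2: "(sqrt 2 ^ n)^2 = (2::real)^n" by (simp add: power2_eq_square power_mult_distrib[symmetric])
  have sq: "(cmod (cnot_cascade (Suc n) (prod_state (Suc n) th) (a # m)))^2 = 1/2 / 2^n" for a
    unfolding A by (simp add: norm_mult norm_divide power_divide nc norm_ket norm_power r2 flip: power_mult_distrib)
  show P: "outcome_prob (cnot_cascade (Suc n) (prod_state (Suc n) th)) m = 1 / 2 ^ n"
    unfolding outcome_prob_def sq by (simp add: UNIV_bool)
  show "post_state (cnot_cascade (Suc n) (prod_state (Suc n) th)) m = (\<lambda>a. c * ket_e (theta_tot (Suc n) th m) a)"
    unfolding post_state_def P A by (simp add: real_sqrt_divide real_sqrt_power)
qed

lemma sign_sum: "(\<Sum>j<length m. (if m!j then -1 else 1::real)) = 2 * real (num_zeros m) - real (length m)"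
proof (induction m)
  case Nil then show ?case by (simp add: num_zeros_def)
next
  case (Cons a m)
  have "(\<Sum>j<length (a#m). (if (a#m)!j then -1 else 1::real)) = (if a then -1 else 1) + (\<Sum>j<length m. (if m!j then -1 else 1::real))"
    by (simp only: length_Cons sum.lessThan_Suc_shift) simp
  then show ?case using Cons by (simp add: num_zeros_def)
qed

lemma theta_same:
  assumes "length m = n"
  shows "theta_tot (Suc n) (\<lambda>_. \<theta>) m = (real (2 * num_zeros m + 2) - real (Suc n)) * \<theta>"
proof -
  have "theta_tot (Suc n) (\<lambda>_. \<theta>) m = \<theta> + (\<Sum>j<n. (if m!j then -1 else 1)) * \<theta>"
    unfolding theta_tot_def shift_sum by (simp add: sum_distrib_right)
  also have "\<dots> = (real (2 * num_zeros m + 2) - real (Suc n)) * \<theta>"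
  proof -
    have "(\<Sum>j<n. (if m!j then -1 else 1)) = 2 * real (num_zeros m) - real n"
      using sign_sum[of m] assms by simp
    note h = this
    show ?thesis unfolding h by (simp add: algebra_simps)
  qed
  finally show ?thesis .
qed

lemma binom_part:
  "(\<Sum>k\<le>n. real (n choose k) / 2 ^ n * (real (2 * k + 2) - real (Suc n))\<^sup>2) = real (Suc n)"
proof -
  have S1': "(\<Sum>xs\<in>L n. real (cnt False xs)) = real n * 2^n / 2" using S1[of False n] by simp
  have S2': "(\<Sum>xs\<in>L n. (real (cnt False xs))^2) = real n * (real n + 1) * 2^n / 4" using S2[of False n] by simp
  have "(\<Sum>k\<le>n. real (n choose k) * (real (2 * k + 2) - real (Suc n))\<^sup>2)
      = (\<Sum>xs\<in>L n. (real (2 * num_zeros xs + 2) - real (Suc n))\<^sup>2)"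
    by (rule group_zeros[symmetric])
  also have "\<dots> = (\<Sum>xs\<in>L n. 4 * (real (cnt False xs))^2 + (4 * (1 - real n)) * real (cnt False xs) + (1 - real n)^2)"
    by (rule sum.cong) (auto simp: nz_cnt power2_eq_square algebra_simps)
  also have "\<dots> = 4 * (\<Sum>xs\<in>L n. (real (cnt False xs))^2) + (4 * (1 - real n)) * (\<Sum>xs\<in>L n. real (cnt False xs)) + (1 - real n)^2 * 2^n"
    by (simp add: sum.distrib sum_distrib_left S0c)
  also have "\<dots> = real (Suc n) * 2^n"
    unfolding S1' S2' by (simp add: power2_eq_square field_simps)
  finally have "(\<Sum>k\<le>n. real (n choose k) * (real (2 * k + 2) - real (Suc n))\<^sup>2) = real (Suc n) * 2^n" .
  then show ?thesis
    by (simp add: sum_divide_distrib[symmetric] mult.commute[of _ "(_ :: real)^2"] divide_simps)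
qed

lemma qfi_ket: "qfi (\<lambda>t. ket_e (r * t)) UNIV \<theta> = r^2"
proof -
  have "qfi (\<lambda>t. ket_e (r * t)) UNIV \<theta> = 4 * ((\<Sum>b\<in>UNIV. ((\<lambda>b. if b then r else 0) b)^2) / (sqrt 2)^2 - ((\<Sum>b\<in>UNIV. (\<lambda>b. if b then r else 0) b) / (sqrt 2)^2)^2)"
    by (rule qfi_cis) (auto simp: ket_e_def fun_eq_iff)
  also have "\<dots> = r^2" by (simp add: UNIV_bool power2_eq_square field_simps)
  finally show ?thesis .
qed

lemma qfi_prod: "qfi (\<lambda>t. prod_state N (\<lambda>_. t)) {xs. length xs = N} \<theta> = real N"
proof -
  have "qfi (\<lambda>t. prod_state N (\<lambda>_. t)) {xs. length xs = N} \<theta>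
     = 4 * ((\<Sum>xs\<in>L N. (real (cnt True xs))^2) / (sqrt 2 ^ N)^2 - ((\<Sum>xs\<in>L N. real (cnt True xs)) / (sqrt 2 ^ N)^2)^2)"
    by (rule qfi_cis) (auto simp: finite_L prod_state_def fun_eq_iff prod_ket_same of_real_power)
  also have "(sqrt 2 ^ N)^2 = (2::real)^N" by (simp add: power2_eq_square power_mult_distrib[symmetric])
  also have "(\<Sum>xs\<in>L N. (real (cnt True xs))^2) = real N * (real N + 1) * 2^N / 4" using S2[of True N] by simp
  also have "(\<Sum>xs\<in>L N. real (cnt True xs)) = real N * 2^N / 2" using S1[of True N] by simp
  finally show ?thesis by (simp add: power2_eq_square field_simps)
qed

theorem mainTheorem2:
  fixes N :: nat and th :: "nat \<Rightarrow> real" and \<theta> :: real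
  assumes "N \<ge> 2"
  shows
    "(\<forall>m. length m = N - 1 \<longrightarrow>
        outcome_prob (cnot_cascade N (prod_state N th)) m = 1 / 2 ^ (N - 1) \<and>
        (\<exists>c. cmod c = 1 \<and>
           post_state (cnot_cascade N (prod_state N th)) m = (\<lambda>a. c * ket_e (theta_tot N th m) a)))
   \<and> (\<forall>k\<le>N - 1.
        (\<Sum>m\<in>{m. length m = N - 1 \<and> num_zeros m = k}.
            outcome_prob (cnot_cascade N (prod_state N (\<lambda>_. \<theta>))) m)
          = real (N - 1 choose k) / 2 ^ (N - 1)
        \<and> (\<forall>m. length m = N - 1 \<and> num_zeros m = k \<longrightarrow>
             (\<exists>c. cmod c = 1 \<and>
                post_state (cnot_cascade N (prod_state N (\<lambda>_. \<theta>))) m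
                  = (\<lambda>a. c * ket_e ((real (2 * k + 2) - real N) * \<theta>) a))))
   \<and> (\<Sum>k\<le>N - 1. real (N - 1 choose k) / 2 ^ (N - 1) * (real (2 * k + 2) - real N)\<^sup>2) = real N
   \<and> (\<Sum>k\<le>N - 1. real (N - 1 choose k) / 2 ^ (N - 1)
          * qfi (\<lambda>t. ket_e ((real (2 * k + 2) - real N) * t)) UNIV \<theta>) = real N
   \<and> qfi (\<lambda>t. prod_state N (\<lambda>_. t)) {xs. length xs = N} \<theta> = real N"
proof -
  obtain n where N: "N = Suc n" using assms by (cases N) auto
  have p1: "\<forall>m. length m = N - 1 \<longrightarrow>
        outcome_prob (cnot_cascade N (prod_state N th)) m = 1 / 2 ^ (N - 1) \<and>
        (\<exists>c. cmod c = 1 \<and>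
           post_state (cnot_cascade N (prod_state N th)) m = (\<lambda>a. c * ket_e (theta_tot N th m) a))"
  proof (intro allI impI)
    fix m :: "bool list" assume "length m = N - 1"
    then have m: "length m = n" using N by simp
    show "outcome_prob (cnot_cascade N (prod_state N th)) m = 1 / 2 ^ (N - 1) \<and>
        (\<exists>c. cmod c = 1 \<and>
           post_state (cnot_cascade N (prod_state N th)) m = (\<lambda>a. c * ket_e (theta_tot N th m) a))"
      unfolding N using part1[OF m, of th] norm_c[of m th n] by auto
  qed
  have p2: "\<forall>k\<le>N - 1.
        (\<Sum>m\<in>{m. length m = N - 1 \<and> num_zeros m = k}.
            outcome_prob (cnot_cascade N (prod_state N (\<lambda>_. \<theta>))) m)
          = real (N - 1 choose k) / 2 ^ (N - 1)
        \<and> (\<forall>m. length m = N - 1 \<and> num_zeros m = k \<longrightarrow>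
             (\<exists>c. cmod c = 1 \<and>
                post_state (cnot_cascade N (prod_state N (\<lambda>_. \<theta>))) m
                  = (\<lambda>a. c * ket_e ((real (2 * k + 2) - real N) * \<theta>) a)))"
  proof (intro allI impI conjI)
    fix k assume "k \<le> N - 1"
    have "(\<Sum>m\<in>{m. length m = n \<and> num_zeros m = k}.
            outcome_prob (cnot_cascade (Suc n) (prod_state (Suc n) (\<lambda>_. \<theta>))) m)
        = (\<Sum>m\<in>{m. length m = n \<and> num_zeros m = k}. 1 / 2 ^ n)"
      by (rule sum.cong) (auto simp: part1)
    also have "\<dots> = real (n choose k) / 2 ^ n" by (simp add: card_zeros)
    finally show "(\<Sum>m\<in>{m. length m = N - 1 \<and> num_zeros m = k}.
            outcome_prob (cnot_cascade N (prod_state N (\<lambda>_. \<theta>))) m)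
          = real (N - 1 choose k) / 2 ^ (N - 1)" unfolding N by simp
    fix m assume m: "length m = N - 1 \<and> num_zeros m = k"
    then have hm: "length m = n" and hk: "num_zeros m = k" using N by auto
    have "post_state (cnot_cascade (Suc n) (prod_state (Suc n) (\<lambda>_. \<theta>))) m
       = (\<lambda>a. (\<Prod>j<n. if m!j then cis \<theta> else 1) * ket_e ((real (2*k+2) - real (Suc n)) * \<theta>) a)"
      by (simp add: part1(2)[OF hm] theta_same[OF hm] hk)
    then show "\<exists>c. cmod c = 1 \<and>
                post_state (cnot_cascade N (prod_state N (\<lambda>_. \<theta>))) m
                  = (\<lambda>a. c * ket_e ((real (2 * k + 2) - real N) * \<theta>) a)"
      unfolding N using norm_c[of m "\<lambda>_. \<theta>" n] by auto
  qed
  have p3: "(\<Sum>k\<le>N - 1. real (N - 1 choose k) / 2 ^ (N - 1) * (real (2 * k + 2) - real N)\<^sup>2) = real N"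
    unfolding N using binom_part by simp
  have p4: "(\<Sum>k\<le>N - 1. real (N - 1 choose k) / 2 ^ (N - 1)
          * qfi (\<lambda>t. ket_e ((real (2 * k + 2) - real N) * t)) UNIV \<theta>) = real N"
    using p3 by (simp add: qfi_ket)
  show ?thesis using p1 p2 p3 p4 qfi_prod by blast
qed

end
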